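(* Let $\pi$ be the policy induced by Dual Gradient Descent with Proxy Assignments (any stepsize and initial prices). For every sample path $\omega$, $$V^\pi[\omega]=\sum_{k\in[K]}\widetilde V^\pi_k\Big[\omega_k\,\Big|\,Z^\pi\big(\tfrac{(k-1)T}K\big)\Big]-\sum_{k\in[K]}\sum_{j\in[n]}\sum_{i\in[m]}c_{ji}\widetilde Z^\pi_{ji,k}\big(\tfrac{kT}K:T\big)-\sum_{k\in[K]}\frac TK\sum_{k'>k}\sum_{i\in[m]}k'g_{k'i}\Bigg(\frac{Z^\pi_i(kT/K)+\widetilde Z^\pi_{i,k}\big(\frac{kT}K:\frac{k'T}K\big)}{k'T/K}\Bigg).$$
   Context: Model. There are $m$ resources and $n$ arrival types; type $j$ has cost vector $c_j\in\mathbb R^m$ and allowed resources $\mathcal S_j\subseteq[m]$. The horizon has $T$ periods partitioned into $K$ epochs ($T$ a multiple of $K$), epoch $k$ being $\mathcal T_k=\{(k-1)T/K+1,\dots,kT/K\}$. In period $t$ one arrival of type $j^t$ occurs; $\omega=(j^1,\dots,j^T)$, $\omega_k=(j^t)_{t\in\mathcal T_k}$. Feasible decisions in period $t$: $\mathcal X^t=\{x\in\{0,1\}^m:\sum_ix_i\le1,\ x_i=0\ \forall i\notin\mathcal S_{j^t}\}$. $Z^\pi_{ji}(t)$ is the number of type-$j$ arrivals assigned to resource $i$ in periods $1..t$, $Z^\pi_i=\sum_jZ^\pi_{ji}$, $Z(t_1:t_2)=Z(t_2)-Z(t_1)$. Each epoch $k$ and resource $i$ has a target $\rho_{ki}\in[0,1]$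 and a convex $L$-Lipschitz $g_{ki}:[0,1]\to\mathbb R_{\ge0}$ with $g_{ki}(\rho_{ki})=0$. The cost is $V^\pi[\omega]=\sum_{j,i}c_{ji}Z^\pi_{ji}(T)+\frac TK\sum_k\sum_ik\,g_{ki}\big(Z^\pi_i(kT/K)/(kT/K)\big)$. Dual Gradient Descent with Proxy Assignments (stepsize $\eta$, initial $\mu^1\in\mathbb R^{K\times m}$): for $t=1,\dots,T$, with $k$ the epoch of $t$: if $t=(k-1)T/K+1$ set $\mu^t_{k'}=\mu^1_{k'}$ for $k'\ge k$; observe $j=j^t$; for every $k'\ge k$ compute the proxy assignment $\tilde x^t_{k'}\in\arg\min_{x\in\mathcal X^t}\sum_ix_i(c_{ji}-\mu^t_{k'i})$; implement $x^t=\tilde x^t_k$; compute $a^t\in\arg\min_{a\in[0,1]^{(K+1-k)\times m}}\sum_{k'\ge k}k'\sum_ig_{k'i}\big(\frac{\sum_{t'\le(k-1)T/K}x^{t'}_i}{k'T/K}+\sum_{k''=k}^{k'}\frac{a_{k''i}}{k'}\big)+\sum_{k'\ge k}\sum_i\mu^t_{k'i}a_{k'i}$; update $\mu^{t+1}_{k'}=\mu^t_{k'}+\eta(a^t_{k'}-\tilde x^t_{k'})$ for $k'\ge k$. Proxy quantities. For $k\le k_1\le k_2\le K$, let $\widetilde Z^\pi_{ji,k}\big(\frac{(k_1-1)T}K:\frac{k_2T}K\big)=\sum_{t\in\mathcal T_k}\sum_{k''=k_1}^{k_2}\tilde x^t_{k''i}\mathbf 1\{j^t=j\}$ and $\widetilde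 Z^\pi_{i,k}(\cdot)=\sum_j\widetilde Z^\pi_{ji,k}(\cdot)$ (so $\frac{kT}K:T$ corresponds to $k_1=k+1$, $k_2=K$, and $(k-1)T/K:T$ to $k_1=k,k_2=K$). The cumulative proxy cost in epoch $k$ given $z\in\mathbb N^m$ is $$\widetilde V^\pi_k[\omega_k\mid z]=\sum_{j,i}c_{ji}\widetilde Z^\pi_{ji,k}\big(\tfrac{(k-1)T}K:T\big)+\frac TK\sum_{k'\ge k}\sum_ik'g_{k'i}\Bigg(\frac{z_i+\widetilde Z^\pi_{i,k}\big(\frac{(k-1)T}K:\frac{k'T}K\big)}{k'T/K}\Bigg).$$ *)

theory Defs
  imports "HOL-Analysis.Analysis"
begin

(* Conventions: resources i \<in> {1..m}, types j \<in> {1..n}, periods t \<in> {1..T},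
   epochs k \<in> {1..K}; D = T div K is the epoch length.
   A decision / proxy assignment is a function nat \<Rightarrow> real (0/1 valued, zero outside {1..m}). *)

definition epoch_of :: "nat \<Rightarrow> nat \<Rightarrow> nat \<Rightarrow> nat" where
  "epoch_of T K t = (t - 1) div (T div K) + 1"

definition epoch_periods :: "nat \<Rightarrow> nat \<Rightarrow> nat \<Rightarrow> nat set" where
  "epoch_periods T K k = {(k - 1) * (T div K) + 1 .. k * (T div K)}"

definition feasible_dec :: "nat \<Rightarrow> (nat \<Rightarrow> nat set) \<Rightarrow> nat \<Rightarrow> (nat \<Rightarrow> real) set" where
  "feasible_dec m S j = {x. (\<forall>i. x i \<in> {0, 1}) \<and> (\<forall>i. i \<notin> {1..m} \<longrightarrow> x i = 0)
      \<and> (\<Sum>i=1..m. x i) \<le> 1 \<and> (\<forall>i\<in>{1..m}. i \<notin> S j \<longrightarrow> x i = 0)}"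

definition policy_x :: "nat \<Rightarrow> nat \<Rightarrow> (nat \<Rightarrow> nat \<Rightarrow> nat \<Rightarrow> real) \<Rightarrow> nat \<Rightarrow> nat \<Rightarrow> real" where
  "policy_x T K xt t i = xt t (epoch_of T K t) i"

(* objective of the a^t problem at a period of epoch k; x = implemented decisions,
   mu = current prices (epoch k' \<Rightarrow> resource i \<Rightarrow> real) *)
definition a_obj :: "nat \<Rightarrow> nat \<Rightarrow> nat \<Rightarrow> nat \<Rightarrow> (nat \<Rightarrow> nat \<Rightarrow> real \<Rightarrow> real)
    \<Rightarrow> (nat \<Rightarrow> nat \<Rightarrow> real) \<Rightarrow> (nat \<Rightarrow> nat \<Rightarrow> real) \<Rightarrow> (nat \<Rightarrow> nat \<Rightarrow> real) \<Rightarrow> real" where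
  "a_obj m T K k g x mu a =
     (\<Sum>k'=k..K. real k' * (\<Sum>i=1..m. g k' i
        ((\<Sum>t'=1..(k - 1) * (T div K). x t' i) / real (k' * (T div K))
         + (\<Sum>k''=k..k'. a k'' i / real k'))))
     + (\<Sum>k'=k..K. \<Sum>i=1..m. mu k' i * a k' i)"

(* xt t k' = proxy assignment \<tilde>x^t_{k'}, mu t k' = \<mu>^t_{k'}, a t k' = a^t_{k'}:
   these sequences are a run of Dual Gradient Descent with Proxy Assignments
   (stepsize eta, initial prices mu1), with arbitrary tie-breaking in the argmins. *)
definition dgd_proxy_run :: "nat \<Rightarrow> nat \<Rightarrow> nat \<Rightarrow> (nat \<Rightarrow> nat set) \<Rightarrow> (nat \<Rightarrow> nat \<Rightarrow> real)
    \<Rightarrow> (nat \<Rightarrow> nat \<Rightarrow> real \<Rightarrow> real) \<Rightarrow> (nat \<Rightarrow> nat) \<Rightarrow> real \<Rightarrow> (nat \<Rightarrow> nat \<Rightarrow> real)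
    \<Rightarrow> (nat \<Rightarrow> nat \<Rightarrow> nat \<Rightarrow> real) \<Rightarrow> (nat \<Rightarrow> nat \<Rightarrow> nat \<Rightarrow> real) \<Rightarrow> (nat \<Rightarrow> nat \<Rightarrow> nat \<Rightarrow> real) \<Rightarrow> bool" where
  "dgd_proxy_run m T K S c g omega eta mu1 xt mu a \<longleftrightarrow>
    (\<forall>t\<in>{1..T}. let k = epoch_of T K t; j = omega t in
       (\<forall>k'\<in>{k..K}. \<forall>i\<in>{1..m}.
          mu t k' i = (if t = (k - 1) * (T div K) + 1 then mu1 k' i
                       else mu (t - 1) k' i + eta * (a (t - 1) k' i - xt (t - 1) k' i)))
     \<and> (\<forall>k'\<in>{k..K}. xt t k' \<in> feasible_dec m S j \<and>
          (\<forall>y\<in>feasible_dec m S j.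
             (\<Sum>i=1..m. xt t k' i * (c j i - mu t k' i)) \<le> (\<Sum>i=1..m. y i * (c j i - mu t k' i))))
     \<and> (\<forall>k'\<in>{k..K}. \<forall>i\<in>{1..m}. a t k' i \<in> {0..1})
     \<and> (\<forall>b. (\<forall>k'\<in>{k..K}. \<forall>i\<in>{1..m}. b k' i \<in> {0..1}) \<longrightarrow>
          a_obj m T K k g (policy_x T K xt) (mu t) (a t) \<le> a_obj m T K k g (policy_x T K xt) (mu t) b))"

definition Z_i :: "nat \<Rightarrow> nat \<Rightarrow> (nat \<Rightarrow> nat \<Rightarrow> nat \<Rightarrow> real) \<Rightarrow> nat \<Rightarrow> nat \<Rightarrow> real" where
  "Z_i T K xt t i = (\<Sum>t'=1..t. policy_x T K xt t' i)"

definition Z_ji :: "nat \<Rightarrow> nat \<Rightarrow> (nat \<Rightarrow> nat) \<Rightarrow> (nat \<Rightarrow> nat \<Rightarrow> nat \<Rightarrow> real) \<Rightarrow> nat \<Rightarrow> nat \<Rightarrow> nat \<Rightarrow> real" where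
  "Z_ji T K omega xt t j i = (\<Sum>t'=1..t. if omega t' = j then policy_x T K xt t' i else 0)"

definition cost_V :: "nat \<Rightarrow> nat \<Rightarrow> nat \<Rightarrow> nat \<Rightarrow> (nat \<Rightarrow> nat \<Rightarrow> real) \<Rightarrow> (nat \<Rightarrow> nat \<Rightarrow> real \<Rightarrow> real)
    \<Rightarrow> (nat \<Rightarrow> nat) \<Rightarrow> (nat \<Rightarrow> nat \<Rightarrow> nat \<Rightarrow> real) \<Rightarrow> real" where
  "cost_V m n T K c g omega xt =
     (\<Sum>j=1..n. \<Sum>i=1..m. c j i * Z_ji T K omega xt T j i)
     + real T / real K * (\<Sum>k=1..K. \<Sum>i=1..m. real k *
          g k i (Z_i T K xt (k * (T div K)) i / real (k * (T div K))))"

(* \<tilde>Z_{ji,k}((k1-1)T/K : k2 T/K) *)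
definition Zt_ji :: "nat \<Rightarrow> nat \<Rightarrow> (nat \<Rightarrow> nat) \<Rightarrow> (nat \<Rightarrow> nat \<Rightarrow> nat \<Rightarrow> real)
    \<Rightarrow> nat \<Rightarrow> nat \<Rightarrow> nat \<Rightarrow> nat \<Rightarrow> nat \<Rightarrow> real" where
  "Zt_ji T K omega xt k k1 k2 j i =
     (\<Sum>t\<in>epoch_periods T K k. \<Sum>k''=k1..k2. xt t k'' i * (if omega t = j then 1 else 0))"

(* \<tilde>Z_{i,k}((k1-1)T/K : k2 T/K) *)
definition Zt_i :: "nat \<Rightarrow> nat \<Rightarrow> nat \<Rightarrow> (nat \<Rightarrow> nat) \<Rightarrow> (nat \<Rightarrow> nat \<Rightarrow> nat \<Rightarrow> real)
    \<Rightarrow> nat \<Rightarrow> nat \<Rightarrow> nat \<Rightarrow> nat \<Rightarrow> real" where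
  "Zt_i n T K omega xt k k1 k2 i = (\<Sum>j=1..n. Zt_ji T K omega xt k k1 k2 j i)"

definition Vt_k :: "nat \<Rightarrow> nat \<Rightarrow> nat \<Rightarrow> nat \<Rightarrow> (nat \<Rightarrow> nat \<Rightarrow> real) \<Rightarrow> (nat \<Rightarrow> nat \<Rightarrow> real \<Rightarrow> real)
    \<Rightarrow> (nat \<Rightarrow> nat) \<Rightarrow> (nat \<Rightarrow> nat \<Rightarrow> nat \<Rightarrow> real) \<Rightarrow> nat \<Rightarrow> (nat \<Rightarrow> real) \<Rightarrow> real" where
  "Vt_k m n T K c g omega xt k z =
     (\<Sum>j=1..n. \<Sum>i=1..m. c j i * Zt_ji T K omega xt k k K j i)
     + real T / real K * (\<Sum>k'=k..K. \<Sum>i=1..m. real k' *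
          g k' i ((z i + Zt_i n T K omega xt k k k' i) / real (k' * (T div K))))"

end

theory Submission
  imports Defs
begin

lemma sum_split_nat:
  fixes f :: "nat \<Rightarrow> 'a::comm_monoid_add"
  assumes "a \<le> b"
  shows "(\<Sum>t=1..b. f t) = (\<Sum>t=1..a. f t) + (\<Sum>t=a+1..b. f t)"
proof -
  have "{1..b} = {1..a} \<union> {a+1..b}" using assms by auto
  thus ?thesis by (simp add: sum.union_disjoint)
qed

lemma epoch_of_in:
  assumes "0 < D" "T div K = D" "1 \<le> k" "t \<in> epoch_periods T K k"
  shows "epoch_of T K t = k"
proof -
  from assms have t1: "(k-1)*D + 1 \<le> t" "t \<le> k*D" by (auto simp: epoch_periods_def)
  have "t - 1 = (k-1)*D + (t - 1 - (k-1)*D)" using t1 by simp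
  moreover have "t - 1 - (k-1)*D < D" using t1 assms(3)
    by (cases k) (auto simp: algebra_simps)
  ultimately have "(t-1) div D = k - 1" using assms(1)
    by (metis add.commute div_mult_self3 div_less add_0 less_not_refl2)
  thus ?thesis using assms by (simp add: epoch_of_def)
qed

lemma sum_epochs:
  assumes "0 < D" "T div K = D"
  shows "(\<Sum>k=1..K'. \<Sum>t\<in>epoch_periods T K k. f t) = (\<Sum>t=1..K'*D. f t)"
proof (induction K')
  case 0 then show ?case by simp
next
  case (Suc K')
  have e: "epoch_periods T K (Suc K') = {K'*D+1..Suc K' * D}" using assms by (simp add: epoch_periods_def)
  have "(\<Sum>t=1..Suc K'*D. f t) = (\<Sum>t=1..K'*D. f t) + (\<Sum>t=K'*D+1..Suc K' * D. f t)"
    by (rule sum_split_nat) simp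
  then show ?case using Suc e by simp
qed

lemma Z_i_step:
  assumes "0 < D" "T div K = D" "1 \<le> k"
  shows "Z_i T K xt (k*D) i = Z_i T K xt ((k-1)*D) i + (\<Sum>t\<in>epoch_periods T K k. xt t k i)"
proof -
  have "Z_i T K xt (k*D) i = Z_i T K xt ((k-1)*D) i + (\<Sum>t=(k-1)*D+1..k*D. policy_x T K xt t i)"
    unfolding Z_i_def using assms(3) by (intro sum_split_nat) (cases k, auto)
  also have "(\<Sum>t=(k-1)*D+1..k*D. policy_x T K xt t i) = (\<Sum>t\<in>epoch_periods T K k. xt t k i)"
    using epoch_of_in[OF assms] assms by (intro sum.cong) (auto simp: epoch_periods_def policy_x_def)
  finally show ?thesis .
qed

lemma sum_ind:
  fixes v :: real and x n :: nat
  assumes "x \<in> {1..n}"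
  shows "(\<Sum>j=1..n. v * (if x = j then 1 else 0)) = v"
proof -
  have "(\<Sum>j=1..n. v * (if x = j then 1 else 0)) = (\<Sum>j\<in>{1..n}. if j = x then v else 0)"
    by (intro sum.cong) auto
  also have "\<dots> = (if x \<in> {1..n} then v else 0)" by (rule sum.delta) simp
  also have "\<dots> = v" using assms by simp
  finally show ?thesis .
qed

theorem proposition3:
  fixes m n T K :: nat and S :: "nat \<Rightarrow> nat set" and c :: "nat \<Rightarrow> nat \<Rightarrow> real"
    and rho :: "nat \<Rightarrow> nat \<Rightarrow> real" and g :: "nat \<Rightarrow> nat \<Rightarrow> real \<Rightarrow> real"
    and Lip :: real and omega :: "nat \<Rightarrow> nat" and eta :: real and mu1 :: "nat \<Rightarrow> nat \<Rightarrow> real"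
    and xt mu a :: "nat \<Rightarrow> nat \<Rightarrow> nat \<Rightarrow> real"
  assumes "0 < K" and "0 < T" and "K dvd T"
    and "\<And>j. j \<in> {1..n} \<Longrightarrow> S j \<subseteq> {1..m}"
    and "\<And>t. t \<in> {1..T} \<Longrightarrow> omega t \<in> {1..n}"
    and "\<And>k i. k \<in> {1..K} \<Longrightarrow> i \<in> {1..m} \<Longrightarrow> rho k i \<in> {0..1}"
    and "\<And>k i. k \<in> {1..K} \<Longrightarrow> i \<in> {1..m} \<Longrightarrow> convex_on {0..1} (g k i)"
    and "\<And>k i x y. k \<in> {1..K} \<Longrightarrow> i \<in> {1..m} \<Longrightarrow> x \<in> {0..1} \<Longrightarrow> y \<in> {0..1}
           \<Longrightarrow> \<bar>g k i x - g k i y\<bar> \<le> Lip * \<bar>x - y\<bar>"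
    and "\<And>k i x. k \<in> {1..K} \<Longrightarrow> i \<in> {1..m} \<Longrightarrow> x \<in> {0..1} \<Longrightarrow> 0 \<le> g k i x"
    and "\<And>k i. k \<in> {1..K} \<Longrightarrow> i \<in> {1..m} \<Longrightarrow> g k i (rho k i) = 0"
    and "dgd_proxy_run m T K S c g omega eta mu1 xt mu a"
  shows "cost_V m n T K c g omega xt =
      (\<Sum>k=1..K. Vt_k m n T K c g omega xt k (\<lambda>i. Z_i T K xt ((k - 1) * (T div K)) i))
    - (\<Sum>k=1..K. \<Sum>j=1..n. \<Sum>i=1..m. c j i * Zt_ji T K omega xt k (k + 1) K j i)
    - (\<Sum>k=1..K. real T / real K * (\<Sum>k'\<in>{k<..K}. \<Sum>i=1..m. real k' *
         g k' i ((Z_i T K xt (k * (T div K)) i + Zt_i n T K omega xt k (k + 1) k' i)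
                 / real (k' * (T div K)))))"
  proof -
  define D where "D = T div K"
  have D0: "0 < D" using assms(1,2,3) unfolding D_def
    by (metis dvd_div_eq_0_iff gr0I less_not_refl2)
  have TD: "T = K * D" using assms(3) unfolding D_def by simp
  have TK: "real T / real K = real D" using TD assms(1) by simp
  have ep_T: "t \<in> {1..T}" if "k \<in> {1..K}" "t \<in> epoch_periods T K k" for k t
  proof -
    have "k * D \<le> K * D" using that by simp
    moreover have "T div K = D" using D_def by simp
    moreover have "t \<le> k * D" "1 \<le> t" using that \<open>T div K = D\<close> by (auto simp: epoch_periods_def)
    ultimately have "t \<le> K * D" "1 \<le> t" by linarith+
    then show ?thesis using TD by simp
  qed
  have split_ji: "Zt_ji T K omega xt k k k' j i = Zt_ji T K omega xt k k k j i + Zt_ji T K omega xt k (k+1) k' j i"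
    if "k \<le> k'" for k k' j i
    unfolding Zt_ji_def sum.distrib[symmetric]
  proof (intro sum.cong refl)
    fix t
    have "(\<Sum>k''=k..k'. xt t k'' i * (if omega t = j then 1 else 0))
       = xt t k i * (if omega t = j then 1 else 0) + (\<Sum>k''=Suc k..k'. xt t k'' i * (if omega t = j then 1 else 0))"
      using that by (rule sum.atLeast_Suc_atMost)
    then show "(\<Sum>k''=k..k'. xt t k'' i * (if omega t = j then 1 else 0))
       = (\<Sum>k''=k..k. xt t k'' i * (if omega t = j then 1 else 0)) + (\<Sum>k''=k+1..k'. xt t k'' i * (if omega t = j then 1 else 0))"
      by simp
  qed
  have kk_ji: "Zt_ji T K omega xt k k k j i = (\<Sum>t\<in>epoch_periods T K k. if omega t = j then policy_x T K xt t i else 0)"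
    if "k \<in> {1..K}" for k j i
    unfolding Zt_ji_def using epoch_of_in[OF D0 D_def[symmetric]] that
    by (intro sum.cong refl) (auto simp: policy_x_def)
  have kk_i: "(\<Sum>j=1..n. Zt_ji T K omega xt k k k j i) = (\<Sum>t\<in>epoch_periods T K k. xt t k i)"
    if "k \<in> {1..K}" for k i
  proof -
    have "(\<Sum>j=1..n. Zt_ji T K omega xt k k k j i) = (\<Sum>t\<in>epoch_periods T K k. \<Sum>j=1..n. xt t k i * (if omega t = j then 1 else 0))"
      unfolding Zt_ji_def atLeastAtMost_singleton sum.insert_if sum.empty by simp (rule sum.swap)
    also have "\<dots> = (\<Sum>t\<in>epoch_periods T K k. xt t k i)"
      using ep_T[OF that] assms(5) by (intro sum.cong refl sum_ind) auto
    finally show ?thesis .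
  qed
  have split_i: "Z_i T K xt ((k - 1) * D) i + Zt_i n T K omega xt k k k' i
      = Z_i T K xt (k * D) i + Zt_i n T K omega xt k (k + 1) k' i"
    if "k \<in> {1..K}" "k \<le> k'" for k k' i
    using that split_ji[OF that(2)] kk_i[OF that(1)] Z_i_step[OF D0 D_def[symmetric], of k xt i]
    by (simp add: Zt_i_def sum.distrib)
  have cost_part: "(\<Sum>k=1..K. \<Sum>j=1..n. \<Sum>i=1..m. c j i * Zt_ji T K omega xt k k K j i)
      - (\<Sum>k=1..K. \<Sum>j=1..n. \<Sum>i=1..m. c j i * Zt_ji T K omega xt k (k + 1) K j i)
      = (\<Sum>j=1..n. \<Sum>i=1..m. c j i * Z_ji T K omega xt T j i)"
  proof -
    have "(\<Sum>k=1..K. \<Sum>j=1..n. \<Sum>i=1..m. c j i * Zt_ji T K omega xt k k K j i)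
      = (\<Sum>k=1..K. \<Sum>j=1..n. \<Sum>i=1..m. c j i * Zt_ji T K omega xt k k k j i)
      + (\<Sum>k=1..K. \<Sum>j=1..n. \<Sum>i=1..m. c j i * Zt_ji T K omega xt k (k + 1) K j i)"
    proof -
      have "(\<Sum>k=1..K. \<Sum>j=1..n. \<Sum>i=1..m. c j i * Zt_ji T K omega xt k k K j i)
        = (\<Sum>k=1..K. \<Sum>j=1..n. \<Sum>i=1..m. c j i * Zt_ji T K omega xt k k k j i + c j i * Zt_ji T K omega xt k (k + 1) K j i)"
      proof (intro sum.cong refl)
        fix k j i assume "k \<in> {1..K}"
        then have "k \<le> K" by simp
        show "c j i * Zt_ji T K omega xt k k K j i = c j i * Zt_ji T K omega xt k k k j i + c j i * Zt_ji T K omega xt k (k + 1) K j i"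
          unfolding split_ji[OF \<open>k \<le> K\<close>, of j i] by (rule distrib_left)
      qed
      then show ?thesis by (simp only: sum.distrib)
    qed
    moreover have "(\<Sum>k=1..K. \<Sum>j=1..n. \<Sum>i=1..m. c j i * Zt_ji T K omega xt k k k j i)
      = (\<Sum>j=1..n. \<Sum>i=1..m. c j i * Z_ji T K omega xt T j i)"
    proof -
      have "(\<Sum>k=1..K. \<Sum>j=1..n. \<Sum>i=1..m. c j i * Zt_ji T K omega xt k k k j i)
        = (\<Sum>j=1..n. \<Sum>i=1..m. c j i * (\<Sum>k=1..K. Zt_ji T K omega xt k k k j i))"
      proof -
        have "(\<Sum>k=1..K. \<Sum>j=1..n. \<Sum>i=1..m. c j i * Zt_ji T K omega xt k k k j i)
          = (\<Sum>j=1..n. \<Sum>k=1..K. \<Sum>i=1..m. c j i * Zt_ji T K omega xt k k k j i)" by (rule sum.swap)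
        also have "\<dots> = (\<Sum>j=1..n. \<Sum>i=1..m. \<Sum>k=1..K. c j i * Zt_ji T K omega xt k k k j i)"
          by (rule sum.cong[OF refl], rule sum.swap)
        also have "\<dots> = (\<Sum>j=1..n. \<Sum>i=1..m. c j i * (\<Sum>k=1..K. Zt_ji T K omega xt k k k j i))"
          by (simp only: sum_distrib_left)
        finally show ?thesis .
      qed
      also have "\<dots> = (\<Sum>j=1..n. \<Sum>i=1..m. c j i * Z_ji T K omega xt T j i)"
      proof (intro sum.cong refl arg_cong[where f="\<lambda>x. c _ _ * x"])
        fix j i
        have "(\<Sum>k=1..K. Zt_ji T K omega xt k k k j i) = (\<Sum>k=1..K. \<Sum>t\<in>epoch_periods T K k. if omega t = j then policy_x T K xt t i else 0)"
          using kk_ji by simp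
        also have "\<dots> = Z_ji T K omega xt T j i"
          unfolding Z_ji_def sum_epochs[OF D0 D_def[symmetric]] TD[symmetric] ..
        finally show "(\<Sum>k=1..K. Zt_ji T K omega xt k k k j i) = Z_ji T K omega xt T j i" .
      qed
      finally show ?thesis .
    qed
    ultimately show ?thesis by simp
  qed
  have g_part: "(\<Sum>k=1..K. (\<Sum>k'=k..K. \<Sum>i=1..m. real k' *
          g k' i ((Z_i T K xt ((k - 1) * D) i + Zt_i n T K omega xt k k k' i) / real (k' * D))))
      = (\<Sum>k=1..K. \<Sum>i=1..m. real k * g k i (Z_i T K xt (k * D) i / real (k * D)))
      + (\<Sum>k=1..K. (\<Sum>k'\<in>{k<..K}. \<Sum>i=1..m. real k' *
         g k' i ((Z_i T K xt (k * D) i + Zt_i n T K omega xt k (k + 1) k' i) / real (k' * D))))"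
    unfolding sum.distrib[symmetric]
  proof (intro sum.cong refl)
    fix k assume k: "k \<in> {1..K}"
    have iv: "{k..K} = insert k {k<..K}" using k by auto
    have kk: "\<And>i. Zt_i n T K omega xt k (k+1) k i = 0"
      by (simp add: Zt_i_def Zt_ji_def)
    show "(\<Sum>k'=k..K. \<Sum>i=1..m. real k' *
          g k' i ((Z_i T K xt ((k - 1) * D) i + Zt_i n T K omega xt k k k' i) / real (k' * D)))
      = (\<Sum>i=1..m. real k * g k i (Z_i T K xt (k * D) i / real (k * D)))
      + (\<Sum>k'\<in>{k<..K}. \<Sum>i=1..m. real k' *
         g k' i ((Z_i T K xt (k * D) i + Zt_i n T K omega xt k (k + 1) k' i) / real (k' * D)))"
      unfolding iv using split_i[OF k] kk by (simp add: less_imp_le)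
  qed
  define E where "E k = (\<Sum>k'\<in>{k<..K}. \<Sum>i=1..m. real k' *
         g k' i ((Z_i T K xt (k * D) i + Zt_i n T K omega xt k (k + 1) k' i) / real (k' * D)))" for k
  define B where "B k = (\<Sum>k'=k..K. \<Sum>i=1..m. real k' *
          g k' i ((Z_i T K xt ((k - 1) * D) i + Zt_i n T K omega xt k k k' i) / real (k' * D)))" for k
  define A where "A k = (\<Sum>j=1..n. \<Sum>i=1..m. c j i * Zt_ji T K omega xt k k K j i)" for k
  define G where "G = (\<Sum>k=1..K. \<Sum>i=1..m. real k * g k i (Z_i T K xt (k * D) i / real (k * D)))"
  define C where "C = (\<Sum>j=1..n. \<Sum>i=1..m. c j i * Z_ji T K omega xt T j i)"
  define C' where "C' = (\<Sum>k=1..K. \<Sum>j=1..n. \<Sum>i=1..m. c j i * Zt_ji T K omega xt k (k + 1) K j i)"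
  have cp: "sum A {1..K} - C' = C" using cost_part unfolding A_def C'_def C_def .
  have gp: "sum B {1..K} = G + sum E {1..K}" using g_part unfolding B_def G_def E_def .
  have lhs: "cost_V m n T K c g omega xt = C + real D * G"
    unfolding cost_V_def C_def G_def TK D_def ..
  have v: "Vt_k m n T K c g omega xt k (\<lambda>i. Z_i T K xt ((k - 1) * (T div K)) i) = A k + real D * B k" for k
    unfolding Vt_k_def A_def B_def TK D_def ..
  have r1: "(\<Sum>k=1..K. Vt_k m n T K c g omega xt k (\<lambda>i. Z_i T K xt ((k - 1) * (T div K)) i))
      = sum A {1..K} + real D * sum B {1..K}"
    unfolding v sum.distrib sum_distrib_left ..
  have r3: "(\<Sum>k=1..K. real T / real K * (\<Sum>k'\<in>{k<..K}. \<Sum>i=1..m. real k' *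
         g k' i ((Z_i T K xt (k * (T div K)) i + Zt_i n T K omega xt k (k + 1) k' i)
                 / real (k' * (T div K))))) = real D * sum E {1..K}"
    unfolding TK E_def D_def sum_distrib_left ..
  have "cost_V m n T K c g omega xt = sum A {1..K} + real D * sum B {1..K} - C' - real D * sum E {1..K}"
    unfolding lhs gp cp[symmetric] by (simp add: algebra_simps)
  then show ?thesis unfolding r1 r3 C'_def .
qed

end
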